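(* Let $p\in\mathcal M_1^+$ with generating function $\psi(z)=\sum_{k\ge0}p_kz^k$, and let $\mathcal R_1(\psi)(z)=\sum_{k\ge0}\mathcal R_1(p)_kz^k$, where $\mathcal R_1(p)_i=\sum_{k,\ell\ge0,\ k+\ell\ge i}\frac{1+\min\{k,\ell,i,k+\ell-i\}}{(k+1)(\ell+1)}p_kp_\ell$. Then the radii of convergence satisfy $\rho(\mathcal R_1(\psi))\ge\rho(\psi)$.
   Context: $\mathcal M_1^+$ is the set of probability measures on $\mathbb N_0$, identified with nonnegative sequences summing to $1$. $\rho(f)$ denotes the radius of convergence of a power series $f$ around $0$. *)

theory Defs
  imports "HOL-Analysis.Analysis"
begin

text \<open>Probability measures on N_0, as nonnegative sequences summing to 1.\<close>
definition prob_seq :: "(nat \<Rightarrow> real) \<Rightarrow> bool" where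
  "prob_seq p \<longleftrightarrow> (\<forall>k. 0 \<le> p k) \<and> p sums 1"

definition R1 :: "(nat \<Rightarrow> real) \<Rightarrow> nat \<Rightarrow> real" where
  "R1 p i = (\<Sum>\<^sub>\<infinity>(k, l)\<in>{(k, l). i \<le> k + l}.
      (1 + real (min (min k l) (min i (k + l - i)))) / (real (k + 1) * real (l + 1)) * p k * p l)"

end

theory Submission
  imports Defs
begin

lemma prod_summable_aux:
  fixes q :: "nat \<Rightarrow> real"
  assumes "summable q" "\<And>k. q k \<ge> 0"
  shows "(\<lambda>(k,l). q k * q l) summable_on UNIV"
proof -
  have hs: "(q has_sum suminf q) UNIV"
    using assms by (intro sums_nonneg_imp_has_sum) (auto intro: summable_sums)
  have "(\<lambda>(k,l). q k * q l) summable_on Sigma UNIV (\<lambda>_. UNIV)"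
  proof (rule summable_on_SigmaI)
    fix k :: nat
    show "((\<lambda>l. (\<lambda>(k,l). q k * q l) (k, l)) has_sum (q k * suminf q)) UNIV"
      using has_sum_cmult_right[OF hs, of "q k"] by simp
  next
    show "(\<lambda>k. q k * suminf q) summable_on UNIV"
      using has_sum_cmult_left[OF hs, of "suminf q"] by (auto simp: summable_on_def)
  next
    fix k l :: nat
    show "0 \<le> (\<lambda>(k,l). q k * q l) (k, l)" using assms by simp
  qed
  then show ?thesis by simp
qed

lemma weight_le1:
  "(1 + real (min (min k l) (min i (k + l - i)))) / (real (k + 1) * real (l + 1)) \<le> 1"
proof -
  have "1 + real (min (min k l) (min i (k + l - i))) \<le> real (k+1)" by simp
  also have "\<dots> \<le> real (k + 1) * real (l + 1)" by simp
  finally show ?thesis by (simp add: divide_le_eq)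
qed

lemma pow_le_aux:
  fixes s :: real
  assumes "s > 0" "i \<le> n"
  shows "s ^ i \<le> 1 + s ^ n"
proof (cases "s \<le> 1")
  case True
  then have "s ^ i \<le> 1" using assms by (simp add: power_le_one)
  then show ?thesis using assms by (smt (verit) zero_le_power)
next
  case False
  then have "s ^ i \<le> s ^ n" using assms by (intro power_increasing) auto
  then show ?thesis by simp
qed

theorem lemma7:
  fixes p :: "nat \<Rightarrow> real"
  assumes "prob_seq p"
  shows "conv_radius (R1 p) \<ge> conv_radius p"
proof (rule conv_radius_geI_ex')
  fix r :: real
  assume r: "0 < r" "ereal r < conv_radius p"
  from assms have pn: "\<And>k. p k \<ge> 0" and ps: "p sums 1" unfolding prob_seq_def by auto
  obtain s where s: "r < s" "ereal s < conv_radius p"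
    using r(2) by (metis ereal_dense2 less_ereal.simps(1) not_less_iff_gr_or_eq ereal_less_eq(3)
        dual_order.strict_trans2 order.strict_implies_order)
  have s0: "s > 0" using r s by simp
  have sumq: "summable (\<lambda>n. p n * s ^ n)"
    using summable_in_conv_radius[of s p] s s0 by simp
  define g where "g = (\<lambda>(k::nat,l::nat). p k * p l + (p k * s^k) * (p l * s^l))"
  have g1: "(\<lambda>(k,l). p k * p l) summable_on UNIV"
    using prod_summable_aux[of p] ps pn by (auto simp: sums_summable)
  have g2: "(\<lambda>(k,l). (p k * s^k) * (p l * s^l)) summable_on UNIV"
    using prod_summable_aux[of "\<lambda>n. p n * s ^ n"] sumq pn s0 by auto
  have gs: "g summable_on UNIV"
    unfolding g_def using summable_on_add[OF g1 g2] by (simp add: case_prod_unfold)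
  define C where "C = infsum g UNIV"
  have bound: "R1 p i * s ^ i \<le> C" for i
  proof -
    define f where "f = (\<lambda>(k::nat, l::nat). (1 + real (min (min k l) (min i (k + l - i)))) / (real (k + 1) * real (l + 1)) * p k * p l)"
    have fle: "f x * s ^ i \<le> g x" if xin: "x \<in> {(k, l). i \<le> k + l}" for x
    proof -
      obtain k l where x: "x = (k,l)" "i \<le> k + l" using xin by (cases x) auto
      have w0: "0 \<le> (1 + real (min (min k l) (min i (k + l - i)))) / (real (k + 1) * real (l + 1))"
        by simp
      have pp: "0 \<le> p k * p l" using pn by simp
      have "f x * s ^ i = (1 + real (min (min k l) (min i (k + l - i)))) / (real (k + 1) * real (l + 1)) * (p k * p l * s ^ i)"
        unfolding f_def x by simp
      also have "\<dots> \<le> 1 * (p k * p l * s ^ i)"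
        by (rule mult_right_mono[OF weight_le1]) (use pp s0 in simp)
      also have "\<dots> \<le> p k * p l * (1 + s ^ (k + l))"
        using mult_left_mono[OF pow_le_aux[OF s0 x(2)] pp] by simp
      also have "\<dots> = g x" unfolding g_def x by (simp add: power_add algebra_simps)
      finally show ?thesis .
    qed
    have fnn: "0 \<le> f x * s ^ i" for x
      unfolding f_def using pn s0 by (auto split: prod.splits)
    have gsub: "g summable_on {(k, l). i \<le> k + l}"
      using gs summable_on_subset_banach by blast
    have fs: "(\<lambda>x. f x * s ^ i) summable_on {(k, l). i \<le> k + l}"
      by (rule summable_on_comparison_test[OF gsub fle fnn])
    have "R1 p i * s ^ i = (\<Sum>\<^sub>\<infinity>x\<in>{(k, l). i \<le> k + l}. f x * s ^ i)"
    proof -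
      have "R1 p i = infsum f {(k, l). i \<le> k + l}" unfolding R1_def f_def by simp
      then show ?thesis by (simp add: infsum_cmult_left')
    qed
    also have "\<dots> \<le> infsum g {(k, l). i \<le> k + l}"
      by (rule infsum_mono[OF fs gsub fle])
    also have "\<dots> \<le> C"
      unfolding C_def
      by (rule infsum_mono2[OF gsub gs]) (use s0 in \<open>auto simp: g_def pn intro!: add_nonneg_nonneg mult_nonneg_nonneg zero_le_power\<close>)
    finally show ?thesis .
  qed
  have R1nn: "R1 p i \<ge> 0" for i
    unfolding R1_def by (rule infsum_nonneg) (use pn in auto)
  have geo: "summable (\<lambda>n. C * (r / s) ^ n)"
    using r s s0 by (intro summable_mult summable_geometric) auto
  show "summable (\<lambda>n. R1 p n * of_real r ^ n)"
  proof (rule summable_comparison_test'[OF geo])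
    fix n :: nat
    have "R1 p n * r ^ n = (R1 p n * s ^ n) * (r / s) ^ n"
      using s0 by (simp add: power_divide)
    also have "\<dots> \<le> C * (r / s) ^ n"
      using bound[of n] r s0 by (intro mult_right_mono) auto
    finally show "norm (R1 p n * of_real r ^ n) \<le> C * (r / s) ^ n"
      using R1nn[of n] r by simp
  qed
qed

end
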